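(* Every morphism in $\mathcal{D}$ is a morphism in $\mathscr{P}$. Thus there is a trace-preserving faithful strict monoidal functor $\mathcal{D}\to\mathscr{P}$ given by inclusion.
   Context: For $i\in\mathbb{N}$ let $V_i\cong\mathbb{C}^2$ with orthonormal basis $v_{i,0},v_{i,1}$, and for a finite ordered index list $A$ put $V_A=\bigotimes_{i\in A}V_i$. For $I\subseteq A$, $|I\rangle=\bigotimes_{i\in A}v_{i,\chi(i,I)}$ and $\langle I|=\bigotimes_{i\in A}v^*_{i,\chi(i,I)}$, where $\chi(i,I)=1$ if $i\in I$ and $0$ otherwise. Determinantal side: for a complex matrix $X$ with rows labeled by $R$ and columns by $S$, $\operatorname{sDet}(X)=\sum_{I\subseteq R,J\subseteq S}\det(X_{I,J})|I\rangle\langle J|$ ($X_{I,J}$ the submatrix on rows $I$, columns $J$; $\det$ of the $0\times0$ matrix is $1$, of non-square matrices $0$). $\mathcal{D}$ is the subcategory of $\mathrm{Vect}_\mathbb{C}$ with objects $V_A$ and morphisms generated by all $\operatorname{sDet}(X)$ under composition (contraction along shared labels) and tensor product, with the usual trace. Pfaffian side: for a skew-symmetric matrix $M$ with rows and columns labeled by the same ordered set $N$, $\operatorname{sPf}(M)=\sum_{I\subseteq N}\operatorname{Pf}(M_I)|I\rangle$ and $\operatorname{sPf}^\vee(M)=\sum_{I\subseteq N}\operatorname{Pf}(M_{\bar I})\langle I|$, where $M_I$ is the principal submatrix on labels $I$, $M_{\bar I}$ the principal submatrix with labels $I$ deleted, and $\operatorname{Pf}$ of the empty matrix is $1$. $\mathscr{P}$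 is the monoidal subcategory of $\mathrm{Vect}_\mathbb{C}$ with objects the $V_N$ and morphisms generated under composition (tensor contraction) and tensor product by all $\operatorname{sPf}(M)$ and $\operatorname{sPf}^\vee(M)$. *)

theory Defs
  imports Complex_Main "Jordan_Normal_Form.Determinant" "HOL-Combinatorics.Permutations"
begin

text \<open>A morphism V_A -> V_B (A = src, B = tgt, ordered lists of distinct labels) is
  represented by its matrix coefficients: coef I J = <I| f |J> for I subset of B,
  J subset of A (and 0 otherwise).\<close>

record tmor =
  tgt :: "nat list"
  src :: "nat list"
  coef :: "nat set \<Rightarrow> nat set \<Rightarrow> complex"

definition sublab :: "nat list \<Rightarrow> nat set \<Rightarrow> nat list" where
  "sublab xs I = filter (\<lambda>i. i \<in> I) xs"

definition detsub :: "(nat \<Rightarrow> nat \<Rightarrow> complex) \<Rightarrow> nat list \<Rightarrow> nat list \<Rightarrow> complex" where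
  "detsub X rs cs = (if length rs = length cs
     then det (mat (length rs) (length cs) (\<lambda>(i, j). X (rs ! i) (cs ! j))) else 0)"

definition pf_mat :: "nat \<Rightarrow> (nat \<Rightarrow> nat \<Rightarrow> complex) \<Rightarrow> complex" where
  "pf_mat n A = (if odd n then 0 else
     (\<Sum>p \<in> {p. p permutes {..<n}}. of_int (sign p) *
        (\<Prod>i<n div 2. A (p (2 * i)) (p (2 * i + 1))))
     / (2 ^ (n div 2) * fact (n div 2)))"

definition pfsub :: "(nat \<Rightarrow> nat \<Rightarrow> complex) \<Rightarrow> nat list \<Rightarrow> complex" where
  "pfsub M xs = pf_mat (length xs) (\<lambda>i j. M (xs ! i) (xs ! j))"

definition skew_on :: "nat list \<Rightarrow> (nat \<Rightarrow> nat \<Rightarrow> complex) \<Rightarrow> bool" where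
  "skew_on N M \<longleftrightarrow> (\<forall>i \<in> set N. \<forall>j \<in> set N. M i j = - M j i)"

definition sDet :: "nat list \<Rightarrow> nat list \<Rightarrow> (nat \<Rightarrow> nat \<Rightarrow> complex) \<Rightarrow> tmor" where
  "sDet R S X = \<lparr> tgt = R, src = S,
     coef = (\<lambda>I J. if I \<subseteq> set R \<and> J \<subseteq> set S
                    then detsub X (sublab R I) (sublab S J) else 0) \<rparr>"

definition sPf :: "nat list \<Rightarrow> (nat \<Rightarrow> nat \<Rightarrow> complex) \<Rightarrow> tmor" where
  "sPf N M = \<lparr> tgt = N, src = [],
     coef = (\<lambda>I J. if I \<subseteq> set N \<and> J = {} then pfsub M (sublab N I) else 0) \<rparr>"

definition sPfv :: "nat list \<Rightarrow> (nat \<Rightarrow> nat \<Rightarrow> complex) \<Rightarrow> tmor" where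
  "sPfv N M = \<lparr> tgt = [], src = N,
     coef = (\<lambda>I J. if I = {} \<and> J \<subseteq> set N then pfsub M (sublab N (- J)) else 0) \<rparr>"

definition idm :: "nat list \<Rightarrow> tmor" where
  "idm A = \<lparr> tgt = A, src = A, coef = (\<lambda>I J. if I \<subseteq> set A \<and> I = J then 1 else 0) \<rparr>"

definition comp :: "tmor \<Rightarrow> tmor \<Rightarrow> tmor" where
  "comp f g = \<lparr> tgt = tgt f, src = src g,
     coef = (\<lambda>I J. \<Sum>K \<in> Pow (set (src f)). coef f I K * coef g K J) \<rparr>"

definition tensor :: "tmor \<Rightarrow> tmor \<Rightarrow> tmor" where
  "tensor f g = \<lparr> tgt = tgt f @ tgt g, src = src f @ src g,
     coef = (\<lambda>I J. if I \<subseteq> set (tgt f @ tgt g) \<and> J \<subseteq> set (src f @ src g)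
        then coef f (I \<inter> set (tgt f)) (J \<inter> set (src f)) *
             coef g (I \<inter> set (tgt g)) (J \<inter> set (src g)) else 0) \<rparr>"

inductive_set Dmor :: "tmor set" where
  gen: "distinct R \<Longrightarrow> distinct S \<Longrightarrow> sDet R S X \<in> Dmor"
| ident: "distinct A \<Longrightarrow> idm A \<in> Dmor"
| compose: "f \<in> Dmor \<Longrightarrow> g \<in> Dmor \<Longrightarrow> src f = tgt g \<Longrightarrow> comp f g \<in> Dmor"
| tens: "f \<in> Dmor \<Longrightarrow> g \<in> Dmor \<Longrightarrow> set (tgt f) \<inter> set (tgt g) = {} \<Longrightarrow>
         set (src f) \<inter> set (src g) = {} \<Longrightarrow> tensor f g \<in> Dmor"

inductive_set Pmor :: "tmor set" where
  genPf: "distinct N \<Longrightarrow> skew_on N M \<Longrightarrow> sPf N M \<in> Pmor"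
| genPfv: "distinct N \<Longrightarrow> skew_on N M \<Longrightarrow> sPfv N M \<in> Pmor"
| ident: "distinct A \<Longrightarrow> idm A \<in> Pmor"
| compose: "f \<in> Pmor \<Longrightarrow> g \<in> Pmor \<Longrightarrow> src f = tgt g \<Longrightarrow> comp f g \<in> Pmor"
| tens: "f \<in> Pmor \<Longrightarrow> g \<in> Pmor \<Longrightarrow> set (tgt f) \<inter> set (tgt g) = {} \<Longrightarrow>
         set (src f) \<inter> set (src g) = {} \<Longrightarrow> tensor f g \<in> Pmor"

end

theory Submission
  imports Defs
begin

fun sg :: "nat \<Rightarrow> complex" where
  "sg 0 = 1" | "sg (Suc k) = (-1)^k * sg k"

lemma sg_sq: "sg k * sg k = 1"
proof (induction k)
  case (Suc k)
  have "sg (Suc k) * sg (Suc k) = ((-1)^k * (-1)^k) * (sg k * sg k)" by (simp add: algebra_simps)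
  also have "(-1::complex)^k * (-1)^k = 1" by (simp add: power_add[symmetric])
  finally show ?case using Suc by simp
qed simp

lemma sg_add: "sg (a + b) = sg a * sg b * (-1)^(a*b)"
proof (induction b)
  case (Suc b)
  have "sg (a + Suc b) = (-1)^(a+b) * sg (a+b)" by simp
  also have "\<dots> = sg a * sg b * ((-1)^b * (-1)^(a*b) * (-1)^a)" using Suc by (simp add: power_add algebra_simps)
  also have "(-1::complex)^b * (-1)^(a*b) * (-1)^a = (-1)^b * (-1)^(a * Suc b)"
    by (simp add: power_add algebra_simps)
  finally show ?case by (simp add: algebra_simps)
qed simp

lemma perm_helper:
  assumes "finite S" "inj_on f S" "f ` S \<subseteq> S" "\<And>x. x \<notin> S \<Longrightarrow> f x = x"
  shows "f permutes S"
  using assms by (intro bij_imp_permutes) (auto simp: bij_betw_def endo_inj_surj)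

definition rho :: "nat \<Rightarrow> nat \<Rightarrow> nat" where
  "rho k j = (if j < 2*k then (if even j then j div 2 else k + j div 2) else j)"

lemma rho_permutes: "rho k permutes {..<2*k}"
proof (rule perm_helper)
  show "inj_on (rho k) {..<2*k}"
    unfolding inj_on_def rho_def by auto presburger+
  show "rho k ` {..<2*k} \<subseteq> {..<2*k}" unfolding rho_def by auto
qed (auto simp: rho_def)

definition cyc :: "nat \<Rightarrow> nat \<Rightarrow> nat \<Rightarrow> nat" where
  "cyc k j x = (if k \<le> x \<and> x < k + j then x + 1 else if x = k + j then k else x)"

lemma cyc_0: "cyc k 0 = id" by (auto simp: cyc_def fun_eq_iff)

lemma cyc_Suc: "cyc k (Suc j) = Transposition.transpose k (k + Suc j) \<circ> cyc k j"
  by (auto simp: cyc_def fun_eq_iff Transposition.transpose_def)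

lemma cyc_perm: "permutation (cyc k j)"
proof (induction j)
  case 0 then show ?case by (simp add: cyc_0)
next
  case (Suc j) then show ?case
    unfolding cyc_Suc by (rule permutation_compose[OF permutation_swap_id])
qed

lemma cyc_sign: "sign (cyc k j) = (-1)^j"
proof (induction j)
  case 0 then show ?case by (simp add: cyc_0)
next
  case (Suc j) then show ?case
    unfolding cyc_Suc by (subst sign_compose[OF permutation_swap_id cyc_perm]) (simp add: sign_swap_id)
qed

lemma rho_Suc: "rho (Suc k) = cyc k k \<circ> rho k"
proof
  fix x
  show "rho (Suc k) x = (cyc k k \<circ> rho k) x"
    unfolding rho_def cyc_def o_def by auto presburger+
qed

lemma rho_perm: "permutation (rho k)"
  using rho_permutes permutes_imp_permutation by blast

lemma rho_sign: "of_int (sign (rho k)) = sg k"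
proof (induction k)
  case 0
  have "rho 0 = id" by (auto simp: rho_def)
  then show ?case by simp
next
  case (Suc k)
  have "sign (rho (Suc k)) = (-1)^k * sign (rho k)"
    by (simp add: rho_Suc sign_compose cyc_perm rho_perm cyc_sign)
  then show ?case using Suc by simp
qed

definition blk :: "nat \<Rightarrow> (nat \<Rightarrow> nat \<Rightarrow> complex) \<Rightarrow> nat \<Rightarrow> nat \<Rightarrow> complex" where
  "blk p A i j = (if i < p \<and> p \<le> j then A i (j - p) else if p \<le> i \<and> j < p then - A j (i - p) else 0)"

lemma blk_skew: "blk p A j i = - blk p A i j"
  by (auto simp: blk_def)
definition gfun :: "nat \<Rightarrow> (nat \<Rightarrow> nat \<Rightarrow> complex) \<Rightarrow> (nat \<Rightarrow> nat) \<Rightarrow> complex" where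
  "gfun k B t = of_int (sign t) * (\<Prod>i<k. B (t i) (t (k + i)))"

definition flip :: "nat \<Rightarrow> nat set \<Rightarrow> nat \<Rightarrow> nat" where
  "flip k E x = (if x < k \<and> x \<in> E then x + k else if k \<le> x \<and> x < 2*k \<and> x - k \<in> E then x - k else x)"

lemma flip_empty: "flip k {} = id" by (auto simp: flip_def fun_eq_iff)

lemma flip_insert:
  assumes "e < k" "e \<notin> E"
  shows "flip k (insert e E) = flip k E \<circ> Transposition.transpose e (e + k)"
proof
  fix x
  show "flip k (insert e E) x = (flip k E \<circ> Transposition.transpose e (e + k)) x"
  proof (cases "x = e")
    case True then show ?thesis using assms by (simp add: flip_def)
  next
    case F1: False
    show ?thesis
    proof (cases "x = e + k")
      case True then show ?thesis using assms by (simp add: flip_def)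
    next
      case False
      then have "Transposition.transpose e (e + k) x = x" using F1 by simp
      moreover have "flip k (insert e E) x = flip k E x"
        using F1 False unfolding flip_def by (smt (verit) add_diff_cancel_right' insert_iff le_add_diff_inverse2)
      ultimately show ?thesis by simp
    qed
  qed
qed

lemma flip_flip: "E \<subseteq> {..<k} \<Longrightarrow> flip k E (flip k E x) = x"
proof -
  assume E: "E \<subseteq> {..<k}"
  consider "x < k \<and> x \<in> E" | "\<not> (x < k \<and> x \<in> E)" "k \<le> x \<and> x < 2*k \<and> x - k \<in> E"
    | "\<not> (x < k \<and> x \<in> E)" "\<not> (k \<le> x \<and> x < 2*k \<and> x - k \<in> E)" by blast
  then show ?thesis
  proof cases
    case 1 then show ?thesis by (simp add: flip_def)
  next
    case 2
    have a: "flip k E x = x - k" using 2 unfolding flip_def by simp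
    have "x - k < k" "x - k \<in> E" using 2 by auto
    then have "flip k E (x - k) = x - k + k" unfolding flip_def by simp
    then show ?thesis using a 2 by simp
  next
    case 3
    then have "flip k E x = x" unfolding flip_def by auto
    then show ?thesis using 3 by simp
  qed
qed

lemma flip_permutes: "E \<subseteq> {..<k} \<Longrightarrow> flip k E permutes {..<2*k}"
proof (rule perm_helper)
  assume E: "E \<subseteq> {..<k}"
  show "inj_on (flip k E) {..<2 * k}" by (metis E flip_flip inj_on_inverseI)
  show "flip k E ` {..<2 * k} \<subseteq> {..<2 * k}"
    unfolding flip_def by auto
  show "\<And>x. x \<notin> {..<2 * k} \<Longrightarrow> flip k E x = x" unfolding flip_def by auto
qed simp

lemma flip_perm: "E \<subseteq> {..<k} \<Longrightarrow> permutation (flip k E)"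
  using flip_permutes permutes_imp_permutation by blast

lemma g_swap:
  assumes skew: "\<And>a b. B b a = - B a b" and t: "permutation t" and e: "e < k"
  shows "gfun k B (t \<circ> Transposition.transpose e (e + k)) = gfun k B t"
proof -
  let ?s = "Transposition.transpose e (e + k)"
  have s1: "sign (t \<circ> ?s) = - sign t"
    using e by (simp add: sign_compose[OF t permutation_swap_id] sign_swap_id)
  have fin: "finite {..<k}" by simp
  have ein: "e \<in> {..<k}" using e by simp
  have "(\<Prod>i<k. B ((t \<circ> ?s) i) ((t \<circ> ?s) (k + i)))
      = B ((t \<circ> ?s) e) ((t \<circ> ?s) (k + e)) * (\<Prod>i\<in>{..<k} - {e}. B ((t \<circ> ?s) i) ((t \<circ> ?s) (k + i)))"
    by (rule prod.remove[OF fin ein])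
  also have "(\<Prod>i\<in>{..<k} - {e}. B ((t \<circ> ?s) i) ((t \<circ> ?s) (k + i))) = (\<Prod>i\<in>{..<k} - {e}. B (t i) (t (k + i)))"
    using e by (intro prod.cong) (auto simp: Transposition.transpose_def)
  also have "B ((t \<circ> ?s) e) ((t \<circ> ?s) (k + e)) = - B (t e) (t (k + e))"
  proof -
    have 1: "?s e = e + k" by simp
    have 2: "?s (k + e) = e" by (simp add: add.commute)
    show ?thesis unfolding o_def 1 2 using skew[of "t e" "t (e + k)"] by (simp add: add.commute)
  qed
  finally have "(\<Prod>i<k. B ((t \<circ> ?s) i) ((t \<circ> ?s) (k + i))) = - (\<Prod>i<k. B (t i) (t (k + i)))"
    using prod.remove[OF fin ein, of "\<lambda>i. B (t i) (t (k + i))"] by simp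
  then show ?thesis unfolding gfun_def s1 by simp
qed

lemma g_flip_aux:
  assumes skew: "\<And>a b. B b a = - B a b"
  shows "finite E \<Longrightarrow> E \<subseteq> {..<k} \<Longrightarrow> permutation t \<Longrightarrow> gfun k B (t \<circ> flip k E) = gfun k B t"
proof (induction E arbitrary: t rule: finite_induct)
  case empty then show ?case by (simp add: flip_empty)
next
  case (insert e E)
  from insert.prems have t: "permutation t" and EE: "insert e E \<subseteq> {..<k}" by auto
  have ek: "e < k" using EE by auto
  have E': "E \<subseteq> {..<k}" using EE by auto
  have eq: "t \<circ> flip k (insert e E) = (t \<circ> flip k E) \<circ> Transposition.transpose e (e + k)"
    using flip_insert[OF ek insert.hyps(2)] by (simp add: o_assoc)
  have p: "permutation (t \<circ> flip k E)" by (rule permutation_compose[OF t flip_perm[OF E']])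
  have "gfun k B (t \<circ> flip k (insert e E)) = gfun k B (t \<circ> flip k E)"
    unfolding eq by (rule g_swap[OF skew p ek])
  also have "\<dots> = gfun k B t" by (rule insert.IH[OF E' t])
  finally show ?case .
qed

lemma g_flip:
  assumes skew: "\<And>a b. B b a = - B a b" and E: "E \<subseteq> {..<k}" and t: "permutation t"
  shows "gfun k B (t \<circ> flip k E) = gfun k B t"
  using g_flip_aux[OF skew finite_subset[OF E] E t] by simp

definition dsum :: "nat \<Rightarrow> (nat \<Rightarrow> nat) \<Rightarrow> (nat \<Rightarrow> nat) \<Rightarrow> nat \<Rightarrow> nat" where
  "dsum k a b x = (if x < k then a x else if x < 2*k then k + b (x - k) else x)"

definition shiftp :: "nat \<Rightarrow> (nat \<Rightarrow> nat) \<Rightarrow> nat \<Rightarrow> nat" where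
  "shiftp k b x = (if k \<le> x \<and> x < 2*k then k + b (x - k) else x)"

lemma shiftp_eq: "shiftp k b = map_permutation {..<k} (\<lambda>x. x + k) b"
proof
  fix y
  show "shiftp k b y = map_permutation {..<k} (\<lambda>x. x + k) b y"
  proof (cases "k \<le> y \<and> y < 2*k")
    case True
    then have y: "y \<in> (\<lambda>x. x + k) ` {..<k}" by (auto intro!: image_eqI[of _ _ "y - k"])
    have inv: "inv_into {..<k} (\<lambda>x. x + k) y = y - k"
      using True by (intro inv_into_f_eq) (auto simp: inj_on_def)
    show ?thesis using True y inv by (simp add: shiftp_def map_permutation_def restrict_id_def add.commute)
  next
    case False
    then have "y \<notin> (\<lambda>x. x + k) ` {..<k}" by auto
    then show ?thesis using False by (auto simp: shiftp_def map_permutation_def restrict_id_def)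
  qed
qed

lemma shiftp_permutes: "b permutes {..<k} \<Longrightarrow> shiftp k b permutes {..<2*k}"
proof -
  assume b: "b permutes {..<k}"
  have bij: "bij_betw (\<lambda>x. x + k) {..<k} ((\<lambda>x. x + k) ` {..<k})" by (auto simp: bij_betw_def inj_on_def)
  have "shiftp k b permutes ((\<lambda>x. x + k) ` {..<k})"
    unfolding shiftp_eq by (rule map_permutation_permutes[OF bij b])
  then show ?thesis by (rule permutes_subset) auto
qed

lemma shiftp_sign: "b permutes {..<k} \<Longrightarrow> sign (shiftp k b) = sign b"
  unfolding shiftp_eq by (rule sign_map_permutation) (auto simp: inj_on_def)

lemma dsum_eq: "a permutes {..<k} \<Longrightarrow> dsum k a b = a \<circ> shiftp k b"
proof
  fix x
  assume a: "a permutes {..<k}"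
  show "dsum k a b x = (a \<circ> shiftp k b) x"
  proof (cases "x < k")
    case True then show ?thesis by (simp add: dsum_def shiftp_def)
  next
    case False
    then show ?thesis using permutes_not_in[OF a] by (simp add: dsum_def shiftp_def)
  qed
qed

lemma dsum_permutes: "a permutes {..<k} \<Longrightarrow> b permutes {..<k} \<Longrightarrow> dsum k a b permutes {..<2*k}"
proof -
  assume a: "a permutes {..<k}" and b: "b permutes {..<k}"
  have a2: "a permutes {..<2*k}" by (rule permutes_subset[OF a]) auto
  show ?thesis unfolding dsum_eq[OF a] by (rule permutes_compose[OF shiftp_permutes[OF b] a2])
qed

lemma dsum_sign: "a permutes {..<k} \<Longrightarrow> b permutes {..<k} \<Longrightarrow> sign (dsum k a b) = sign a * sign b"
proof -
  assume a: "a permutes {..<k}" and b: "b permutes {..<k}"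
  have pa: "permutation a" using a permutes_imp_permutation by blast
  have pb: "permutation (shiftp k b)" using shiftp_permutes[OF b] permutes_imp_permutation by blast
  show ?thesis unfolding dsum_eq[OF a] sign_compose[OF pa pb] shiftp_sign[OF b] ..
qed

lemma C0_high:
  fixes t :: "nat \<Rightarrow> nat"
  assumes t: "t permutes {..<2*k}" and low: "\<forall>i<k. t i < k" and j: "k \<le> j" "j < 2*k"
  shows "k \<le> t j"
proof (rule ccontr)
  assume "\<not> k \<le> t j"
  then have tj: "t j < k" by linarith
  have inj: "inj t" using permutes_inj[OF t] .
  have "t ` {..<k} \<subseteq> {..<k}" using low by auto
  then have "t ` {..<k} = {..<k}" using inj by (intro endo_inj_surj) (auto simp: inj_on_def inj_def)
  then obtain i where "i < k" "t j = t i" using tj by (metis imageE lessThan_iff)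
  then show False using inj j by (metis injD not_le)
qed

lemma flip_apply_low: "i < k \<Longrightarrow> flip k E i = (if i \<in> E then i + k else i)"
  by (simp add: flip_def)

lemma flip_apply_high: "i < k \<Longrightarrow> flip k E (k + i) = (if i \<in> E then i else k + i)"
  by (simp add: flip_def)

definition Cr :: "nat \<Rightarrow> (nat \<Rightarrow> nat) set" where
  "Cr k = {t. t permutes {..<2*k} \<and> (\<forall>i<k. (t i < k) \<noteq> (t (k + i) < k))}"

definition C0 :: "nat \<Rightarrow> (nat \<Rightarrow> nat) set" where
  "C0 k = {t. t permutes {..<2*k} \<and> (\<forall>i<k. t i < k)}"

lemma flip_C0_test:
  assumes E: "E \<subseteq> {..<k}" and t0: "t0 \<in> C0 k" and i: "i < k"
  shows "(k \<le> (t0 \<circ> flip k E) i) \<longleftrightarrow> i \<in> E"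
proof (cases "i \<in> E")
  case True
  then have "(t0 \<circ> flip k E) i = t0 (i + k)" using i by (simp add: flip_apply_low)
  moreover have "k \<le> t0 (i + k)" using t0 i by (intro C0_high[of t0 k]) (auto simp: C0_def)
  ultimately show ?thesis using True by simp
next
  case False
  then have "(t0 \<circ> flip k E) i = t0 i" using i by (simp add: flip_apply_low)
  moreover have "t0 i < k" using t0 i by (auto simp: C0_def)
  ultimately show ?thesis using False by simp
qed

lemma bij1: "bij_betw (\<lambda>(E, t0). t0 \<circ> flip k E) (Pow {..<k} \<times> C0 k) (Cr k)"
  unfolding bij_betw_def
proof (intro conjI)
  show "inj_on (\<lambda>(E, t0). t0 \<circ> flip k E) (Pow {..<k} \<times> C0 k)"
  proof (rule inj_onI, clarify)
    fix E t0 E' t0'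
    assume E: "E \<subseteq> {..<k}" and t0: "t0 \<in> C0 k" and E': "E' \<subseteq> {..<k}" and t0': "t0' \<in> C0 k"
      and eq: "t0 \<circ> flip k E = t0' \<circ> flip k E'"
    have EE: "E = E'"
    proof
      show "E \<subseteq> E'"
      proof
        fix i assume "i \<in> E"
        then have i: "i < k" using E by auto
        then show "i \<in> E'" using flip_C0_test[OF E t0 i] flip_C0_test[OF E' t0' i] eq \<open>i \<in> E\<close> by simp
      qed
      show "E' \<subseteq> E"
      proof
        fix i assume "i \<in> E'"
        then have i: "i < k" using E' by auto
        then show "i \<in> E" using flip_C0_test[OF E t0 i] flip_C0_test[OF E' t0' i] eq \<open>i \<in> E'\<close> by simp
      qed
    qed
    have "t0 = t0'"
    proof
      fix x
      have "t0 x = (t0 \<circ> flip k E) (flip k E x)" using flip_flip[OF E] by simp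
      also have "\<dots> = (t0' \<circ> flip k E) (flip k E x)" using eq EE by simp
      also have "\<dots> = t0' x" using flip_flip[OF E] by simp
      finally show "t0 x = t0' x" .
    qed
    then show "E = E' \<and> t0 = t0'" using EE by simp
  qed
  show "(\<lambda>(E, t0). t0 \<circ> flip k E) ` (Pow {..<k} \<times> C0 k) = Cr k"
  proof
    show "(\<lambda>(E, t0). t0 \<circ> flip k E) ` (Pow {..<k} \<times> C0 k) \<subseteq> Cr k"
    proof clarify
      fix E t0
      assume E: "E \<subseteq> {..<k}" and t0: "t0 \<in> C0 k"
      have tp: "t0 permutes {..<2*k}" and low: "\<forall>i<k. t0 i < k" using t0 by (auto simp: C0_def)
      have p: "t0 \<circ> flip k E permutes {..<2*k}" by (rule permutes_compose[OF flip_permutes[OF E] tp])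
      have "\<forall>i<k. ((t0 \<circ> flip k E) i < k) \<noteq> ((t0 \<circ> flip k E) (k + i) < k)"
      proof (intro allI impI)
        fix i assume i: "i < k"
        have h1: "k \<le> t0 (k + i)" using C0_high[OF tp low] i by simp
        have h2: "k \<le> t0 (i + k)" using C0_high[OF tp low] i by simp
        show "((t0 \<circ> flip k E) i < k) \<noteq> ((t0 \<circ> flip k E) (k + i) < k)"
          using i low h1 h2 by (simp add: flip_apply_low flip_apply_high)
      qed
      then show "t0 \<circ> flip k E \<in> Cr k" using p by (simp add: Cr_def)
    qed
    show "Cr k \<subseteq> (\<lambda>(E, t0). t0 \<circ> flip k E) ` (Pow {..<k} \<times> C0 k)"
    proof
      fix t assume t: "t \<in> Cr k"
      have tp: "t permutes {..<2*k}" and cr: "\<forall>i<k. (t i < k) \<noteq> (t (k + i) < k)" using t by (auto simp: Cr_def)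
      define E where "E = {i. i < k \<and> \<not> t i < k}"
      have E: "E \<subseteq> {..<k}" by (auto simp: E_def)
      have "t \<circ> flip k E \<in> C0 k"
      proof -
        have "t \<circ> flip k E permutes {..<2*k}" by (rule permutes_compose[OF flip_permutes[OF E] tp])
        moreover have "\<forall>i<k. (t \<circ> flip k E) i < k"
        proof (intro allI impI)
          fix i assume i: "i < k"
          show "(t \<circ> flip k E) i < k"
          proof (cases "i \<in> E")
            case True
            then have "\<not> t i < k" by (simp add: E_def)
            then have "t (k + i) < k" using cr i by blast
            then show ?thesis using True i by (simp add: flip_apply_low add.commute)
          next
            case False
            then show ?thesis using i by (simp add: flip_apply_low E_def)
          qed
        qed
        ultimately show ?thesis by (simp add: C0_def)
      qed
      moreover have "t = (t \<circ> flip k E) \<circ> flip k E" using flip_flip[OF E] by (simp add: fun_eq_iff)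
      ultimately show "t \<in> (\<lambda>(E, t0). t0 \<circ> flip k E) ` (Pow {..<k} \<times> C0 k)"
        using E by (intro image_eqI[of _ _ "(E, t \<circ> flip k E)"]) auto
    qed
  qed
qed

definition PP :: "nat \<Rightarrow> (nat \<Rightarrow> nat) set" where
  "PP k = {a. a permutes {..<k}}"

lemma bij2: "bij_betw (\<lambda>(a, b). dsum k a b) (PP k \<times> PP k) (C0 k)"
  unfolding bij_betw_def
proof (intro conjI)
  show "inj_on (\<lambda>(a, b). dsum k a b) (PP k \<times> PP k)"
  proof (rule inj_onI, clarify)
    fix a b a' b'
    assume a: "a \<in> PP k" and b: "b \<in> PP k" and a': "a' \<in> PP k" and b': "b' \<in> PP k"
      and eq: "dsum k a b = dsum k a' b'"
    have ap: "a permutes {..<k}" "a' permutes {..<k}" "b permutes {..<k}" "b' permutes {..<k}"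
      using a b a' b' by (auto simp: PP_def)
    have "a = a'"
    proof
      fix x show "a x = a' x"
      proof (cases "x < k")
        case True then show ?thesis using fun_cong[OF eq, of x] by (simp add: dsum_def)
      next
        case False then show ?thesis using permutes_not_in[OF ap(1)] permutes_not_in[OF ap(2)] by simp
      qed
    qed
    moreover have "b = b'"
    proof
      fix x show "b x = b' x"
      proof (cases "x < k")
        case True then show ?thesis using fun_cong[OF eq, of "k + x"] by (simp add: dsum_def)
      next
        case False then show ?thesis using permutes_not_in[OF ap(3)] permutes_not_in[OF ap(4)] by simp
      qed
    qed
    ultimately show "a = a' \<and> b = b'" by simp
  qed
  show "(\<lambda>(a, b). dsum k a b) ` (PP k \<times> PP k) = C0 k"
  proof
    show "(\<lambda>(a, b). dsum k a b) ` (PP k \<times> PP k) \<subseteq> C0 k"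
    proof clarify
      fix a b assume a: "a \<in> PP k" and b: "b \<in> PP k"
      have ap: "a permutes {..<k}" "b permutes {..<k}" using a b by (auto simp: PP_def)
      have "\<forall>i<k. dsum k a b i < k" using permutes_in_image[OF ap(1)] by (simp add: dsum_def)
      then show "dsum k a b \<in> C0 k" using dsum_permutes[OF ap] by (simp add: C0_def)
    qed
    show "C0 k \<subseteq> (\<lambda>(a, b). dsum k a b) ` (PP k \<times> PP k)"
    proof
      fix t assume t: "t \<in> C0 k"
      have tp: "t permutes {..<2*k}" and low: "\<forall>i<k. t i < k" using t by (auto simp: C0_def)
      have high: "\<And>j. k \<le> j \<Longrightarrow> j < 2*k \<Longrightarrow> k \<le> t j" using C0_high[OF tp low] by blast
      have tinj: "inj t" by (rule permutes_inj[OF tp])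
      define a where "a = (\<lambda>x. if x < k then t x else x)"
      define b where "b = (\<lambda>x. if x < k then t (k + x) - k else x)"
      have ap: "a permutes {..<k}"
      proof (rule perm_helper)
        show "inj_on a {..<k}" using tinj by (auto simp: a_def inj_on_def inj_def)
        show "a ` {..<k} \<subseteq> {..<k}" using low by (auto simp: a_def)
      qed (auto simp: a_def)
      have bp: "b permutes {..<k}"
      proof (rule perm_helper)
        show "inj_on b {..<k}"
        proof (rule inj_onI)
          fix x y assume x: "x \<in> {..<k}" and y: "y \<in> {..<k}" and e: "b x = b y"
          have "k \<le> t (k + x)" "k \<le> t (k + y)" using high x y by auto
          then have "t (k + x) = t (k + y)" using e x y by (simp add: b_def)
          then have "k + x = k + y" by (rule injD[OF tinj])
          then show "x = y" by simp
        qed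
        show "b ` {..<k} \<subseteq> {..<k}"
        proof clarify
          fix x assume x: "x < k"
          have "t (k + x) < 2*k" using permutes_in_image[OF tp, of "k + x"] x by simp
          then show "b x < k" using x by (simp add: b_def)
        qed
      qed (auto simp: b_def)
      have "t = dsum k a b"
      proof
        fix x show "t x = dsum k a b x"
        proof (cases "x < k")
          case True then show ?thesis by (simp add: dsum_def a_def)
        next
          case False
          show ?thesis
          proof (cases "x < 2*k")
            case True
            have "k \<le> t x" using high False True by simp
            have xk: "x - k < k" using True by simp
            have kx: "k + (x - k) = x" using False by simp
            have "dsum k a b x = k + b (x - k)" using False True by (simp add: dsum_def)
            also have "b (x - k) = t x - k" using xk kx by (simp add: b_def)
            finally show ?thesis using \<open>k \<le> t x\<close> by simp
          next
            case F2: False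
            then show ?thesis using False permutes_not_in[OF tp, of x] by (simp add: dsum_def)
          qed
        qed
      qed
      then show "t \<in> (\<lambda>(a, b). dsum k a b) ` (PP k \<times> PP k)"
        using ap bp by (intro image_eqI[of _ _ "(a, b)"]) (auto simp: PP_def)
    qed
  qed
qed

lemma gfun_dsum:
  assumes a: "a permutes {..<k}" and b: "b permutes {..<k}"
  shows "gfun k (blk k A) (dsum k a b) = of_int (sign a) * of_int (sign b) * (\<Prod>i<k. A (a i) (b i))"
proof -
  have "(\<Prod>i<k. blk k A (dsum k a b i) (dsum k a b (k + i))) = (\<Prod>i<k. A (a i) (b i))"
  proof (rule prod.cong)
    fix i assume "i \<in> {..<k}"
    then have i: "i < k" by simp
    have ai: "a i < k" using permutes_in_image[OF a] i by simp
    have "dsum k a b i = a i" using i by (simp add: dsum_def)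
    moreover have "dsum k a b (k + i) = k + b i" using i by (simp add: dsum_def)
    ultimately show "blk k A (dsum k a b i) (dsum k a b (k + i)) = A (a i) (b i)"
      using ai by (simp add: blk_def)
  qed simp
  then show ?thesis unfolding gfun_def dsum_sign[OF a b] by simp
qed

lemma det_rows_perm:
  assumes a: "a permutes {..<k}"
  shows "(\<Sum>b\<in>PP k. of_int (sign b) * (\<Prod>i<k. A (a i) (b i))) = of_int (sign a) * det (mat k k (\<lambda>(i,j). A i j))"
proof -
  let ?M = "mat k k (\<lambda>(i,j). A i j)"
  have M: "?M \<in> carrier_mat k k" by simp
  have a0: "a permutes {0..<k}" using a by (simp add: atLeast0LessThan)
  have "det (mat k k (\<lambda>(i,j). ?M $$ (a i, j))) = signof a * det ?M"
    by (rule det_permute_rows[OF M a0])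
  moreover have "det (mat k k (\<lambda>(i,j). ?M $$ (a i, j))) = (\<Sum>b\<in>PP k. of_int (sign b) * (\<Prod>i<k. A (a i) (b i)))"
  proof -
    have "det (mat k k (\<lambda>(i,j). ?M $$ (a i, j))) = (\<Sum>b\<in>PP k. of_int (sign b) * (\<Prod>i<k. mat k k (\<lambda>(i, j). mat k k (\<lambda>(i, j). A i j) $$ (a i, j)) $$ (i, b i)))"
      unfolding det_def PP_def by (simp add: atLeast0LessThan)
    also have "\<dots> = (\<Sum>b\<in>PP k. of_int (sign b) * (\<Prod>i<k. A (a i) (b i)))"
    proof (rule sum.cong[OF refl])
    fix b assume "b \<in> PP k"
    then have b: "b permutes {..<k}" by (simp add: PP_def)
    show "of_int (sign b) * (\<Prod>i<k. mat k k (\<lambda>(i, j). mat k k (\<lambda>(i, j). A i j) $$ (a i, j)) $$ (i, b i))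
       = of_int (sign b) * (\<Prod>i<k. A (a i) (b i))"
    proof (intro arg_cong2[where f = "(*)"] refl prod.cong)
      fix i assume "i \<in> {..<k}"
      then have i: "i < k" by simp
      have "a i < k" "b i < k" using permutes_in_image[OF a] permutes_in_image[OF b] i by auto
      then show "mat k k (\<lambda>(i, j). mat k k (\<lambda>(i, j). A i j) $$ (a i, j)) $$ (i, b i) = A (a i) (b i)"
        using i by simp
    qed
  qed
  finally show ?thesis .
  qed
  ultimately show ?thesis by simp
qed

lemma finite_PP: "finite (PP k)" by (simp add: PP_def finite_permutations)
lemma finite_C0: "finite (C0 k)"
  by (rule finite_subset[of _ "{t. t permutes {..<2*k}}"]) (auto simp: C0_def finite_permutations)

lemma gsum_square:
  "(\<Sum>t | t permutes {..<2*k}. gfun k (blk k A) t) = 2^k * fact k * det (mat k k (\<lambda>(i,j). A i j))"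
proof -
  let ?g = "gfun k (blk k A)"
  let ?T = "{t. t permutes {..<2*k}}"
  have finT: "finite ?T" by (simp add: finite_permutations)
  have s1: "(\<Sum>t\<in>?T. ?g t) = (\<Sum>t\<in>Cr k. ?g t)"
  proof (rule sum.mono_neutral_right[OF finT])
    show "Cr k \<subseteq> ?T" by (auto simp: Cr_def)
    show "\<forall>t\<in>?T - Cr k. ?g t = 0"
    proof
      fix t assume t: "t \<in> ?T - Cr k"
      then obtain i where i: "i < k" and same: "(t i < k) = (t (k + i) < k)" by (auto simp: Cr_def)
      have "blk k A (t i) (t (k + i)) = 0" using same by (auto simp: blk_def)
      then have "(\<Prod>i<k. blk k A (t i) (t (k + i))) = 0" using i by (intro prod_zero) auto
      then show "?g t = 0" by (simp add: gfun_def)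
    qed
  qed
  have s2: "(\<Sum>t\<in>Cr k. ?g t) = (\<Sum>x\<in>Pow {..<k} \<times> C0 k. ?g ((\<lambda>(E, t0). t0 \<circ> flip k E) x))"
    by (rule sum.reindex_bij_betw[OF bij1, symmetric])
  also have "\<dots> = (\<Sum>x\<in>Pow {..<k} \<times> C0 k. ?g (snd x))"
  proof (rule sum.cong[OF refl])
    fix x assume x: "x \<in> Pow {..<k} \<times> C0 k"
    then obtain E t0 where xe: "x = (E, t0)" and E: "E \<subseteq> {..<k}" and t0: "t0 \<in> C0 k" by auto
    have "permutation t0" using t0 permutes_imp_permutation by (auto simp: C0_def)
    then show "?g ((\<lambda>(E, t0). t0 \<circ> flip k E) x) = ?g (snd x)"
      using g_flip[OF blk_skew E] xe by simp
  qed
  also have "\<dots> = (\<Sum>E\<in>Pow {..<k}. \<Sum>t0\<in>C0 k. ?g t0)"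
    by (subst sum.cartesian_product) (simp add: case_prod_beta)
  also have "\<dots> = 2^k * (\<Sum>t0\<in>C0 k. ?g t0)"
    by (simp add: card_Pow)
  finally have s3: "(\<Sum>t\<in>Cr k. ?g t) = 2^k * (\<Sum>t0\<in>C0 k. ?g t0)" .
  have "(\<Sum>t0\<in>C0 k. ?g t0) = (\<Sum>x\<in>PP k \<times> PP k. ?g ((\<lambda>(a, b). dsum k a b) x))"
    by (rule sum.reindex_bij_betw[OF bij2, symmetric])
  also have "\<dots> = (\<Sum>x\<in>PP k \<times> PP k. of_int (sign (fst x)) * of_int (sign (snd x)) * (\<Prod>i<k. A (fst x i) (snd x i)))"
    by (rule sum.cong[OF refl], clarify) (simp add: gfun_dsum PP_def)
  also have "\<dots> = (\<Sum>a\<in>PP k. \<Sum>b\<in>PP k. of_int (sign a) * of_int (sign b) * (\<Prod>i<k. A (a i) (b i)))"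
    by (subst sum.cartesian_product) (simp add: case_prod_beta)
  also have "\<dots> = (\<Sum>a\<in>PP k. of_int (sign a) * (\<Sum>b\<in>PP k. of_int (sign b) * (\<Prod>i<k. A (a i) (b i))))"
    by (simp add: sum_distrib_left mult.assoc)
  also have "\<dots> = (\<Sum>a\<in>PP k. det (mat k k (\<lambda>(i,j). A i j)))"
  proof (rule sum.cong[OF refl])
    fix a assume "a \<in> PP k"
    then have a: "a permutes {..<k}" by (simp add: PP_def)
    have ss: "(of_int (sign a) :: complex) * of_int (sign a) = 1"
      by (simp add: of_int_mult[symmetric])
    show "of_int (sign a) * (\<Sum>b\<in>PP k. of_int (sign b) * (\<Prod>i<k. A (a i) (b i))) = det (mat k k (\<lambda>(i,j). A i j))"
      unfolding det_rows_perm[OF a] mult.assoc[symmetric] ss by simp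
  qed
  also have "\<dots> = fact k * det (mat k k (\<lambda>(i,j). A i j))"
    by (simp add: PP_def card_permutations)
  finally have s4: "(\<Sum>t0\<in>C0 k. ?g t0) = fact k * det (mat k k (\<lambda>(i,j). A i j))" .
  show ?thesis using s1 s3 s4 by (simp add: mult.assoc)
qed

lemma cross_count:
  fixes t :: "nat \<Rightarrow> nat"
  assumes t: "t permutes {..<2*k}" and p: "p \<le> 2*k"
    and cr: "\<forall>i<k. (t i < p) \<noteq> (t (k + i) < p)"
  shows "p = k"
proof -
  define S where "S = {j. j < 2*k \<and> t j < p}"
  have inj: "inj t" by (rule permutes_inj[OF t])
  have img: "t ` S = {..<p}"
  proof
    show "t ` S \<subseteq> {..<p}" by (auto simp: S_def)
    show "{..<p} \<subseteq> t ` S"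
    proof
      fix y assume y: "y \<in> {..<p}"
      have "y \<in> {..<2*k}" using y p by auto
      then have "y \<in> t ` {..<2*k}" using permutes_image[OF t] by simp
      then obtain j where j: "j < 2*k" "y = t j" by auto
      then show "y \<in> t ` S" using y by (auto simp: S_def)
    qed
  qed
  have cS: "card S = p"
  proof -
    have "card (t ` S) = card S" by (rule card_image) (use inj in \<open>auto simp: inj_on_def inj_def\<close>)
    then show ?thesis using img by simp
  qed
  define A1 where "A1 = {i. i < k \<and> t i < p}"
  define A2 where "A2 = {i. i < k \<and> \<not> t i < p}"
  have SA: "S = A1 \<union> (\<lambda>i. k + i) ` A2"
  proof
    show "S \<subseteq> A1 \<union> (\<lambda>i. k + i) ` A2"
    proof
      fix j assume j: "j \<in> S"
      show "j \<in> A1 \<union> (\<lambda>i. k + i) ` A2"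
      proof (cases "j < k")
        case True then show ?thesis using j by (auto simp: S_def A1_def)
      next
        case False
        then have jj: "j = k + (j - k)" "j - k < k" using j by (auto simp: S_def)
        then have "t (k + (j - k)) < p" using j by (simp add: S_def)
        then have "\<not> t (j - k) < p" using cr jj(2) by blast
        then have "j - k \<in> A2" using jj by (simp add: A2_def)
        then show ?thesis using jj(1) by blast
      qed
    qed
    show "A1 \<union> (\<lambda>i. k + i) ` A2 \<subseteq> S"
    proof
      fix j assume "j \<in> A1 \<union> (\<lambda>i. k + i) ` A2"
      then show "j \<in> S"
      proof
        assume "j \<in> A1" then show ?thesis by (auto simp: A1_def S_def)
      next
        assume "j \<in> (\<lambda>i. k + i) ` A2"
        then obtain i where i: "i \<in> A2" "j = k + i" by auto
        then have "t (k + i) < p" using cr by (auto simp: A2_def)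
        then show ?thesis using i by (auto simp: A2_def S_def)
      qed
    qed
  qed
  have "card S = card A1 + card ((\<lambda>i. k + i) ` A2)"
    unfolding SA by (rule card_Un_disjoint) (auto simp: A1_def A2_def)
  also have "card ((\<lambda>i. k + i) ` A2) = card A2" by (rule card_image) (auto simp: inj_on_def)
  also have "card A1 + card A2 = card (A1 \<union> A2)"
    by (rule card_Un_disjoint[symmetric]) (auto simp: A1_def A2_def)
  also have "A1 \<union> A2 = {..<k}" by (auto simp: A1_def A2_def)
  finally show ?thesis using cS by simp
qed

lemma gsum_nonsquare:
  assumes "p \<noteq> k" "p \<le> 2*k"
  shows "(\<Sum>t | t permutes {..<2*k}. gfun k (blk p A) t) = 0"
proof (rule sum.neutral, clarify)
  fix t assume t: "t permutes {..<2*k}"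
  have "\<exists>i<k. (t i < p) = (t (k + i) < p)"
    using cross_count[OF t assms(2)] assms(1) by blast
  then obtain i where i: "i < k" and same: "(t i < p) = (t (k + i) < p)" by blast
  have "blk p A (t i) (t (k + i)) = 0" using same by (auto simp: blk_def)
  then have "(\<Prod>i<k. blk p A (t i) (t (k + i))) = 0" using i by (intro prod_zero) auto
  then show "gfun k (blk p A) t = 0" by (simp add: gfun_def)
qed

lemma pf_mat_cong:
  assumes "\<And>i j. i < n \<Longrightarrow> j < n \<Longrightarrow> B i j = B' i j"
  shows "pf_mat n B = pf_mat n B'"
proof -
  have "(\<Sum>s\<in>{s. s permutes {..<n}}. of_int (sign s) * (\<Prod>i<n div 2. B (s (2 * i)) (s (2 * i + 1))))
      = (\<Sum>s\<in>{s. s permutes {..<n}}. of_int (sign s) * (\<Prod>i<n div 2. B' (s (2 * i)) (s (2 * i + 1))))"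
  proof (rule sum.cong[OF refl])
    fix s assume "s \<in> {s. s permutes {..<n}}"
    then have s: "s permutes {..<n}" by simp
    show "of_int (sign s) * (\<Prod>i<n div 2. B (s (2 * i)) (s (2 * i + 1))) = of_int (sign s) * (\<Prod>i<n div 2. B' (s (2 * i)) (s (2 * i + 1)))"
    proof (intro arg_cong2[where f = "(*)"] refl prod.cong)
      fix i assume "i \<in> {..<n div 2}"
      then have "2 * i < n" "2 * i + 1 < n" by auto
      then have "s (2 * i) < n" "s (2 * i + 1) < n" using permutes_in_image[OF s] by auto
      then show "B (s (2 * i)) (s (2 * i + 1)) = B' (s (2 * i)) (s (2 * i + 1))" using assms by blast
    qed
  qed
  then show ?thesis unfolding pf_mat_def by simp
qed

lemma rho_even: "i < k \<Longrightarrow> rho k (2 * i) = i" by (simp add: rho_def)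
lemma rho_odd: "i < k \<Longrightarrow> rho k (2 * i + 1) = k + i" by (simp add: rho_def)
lemma rho_odd': "i < k \<Longrightarrow> rho k (Suc (2 * i)) = k + i" using rho_odd by simp

lemma pf_blk:
  "pf_mat (p + q) (blk p A) = (if p = q then sg p * det (mat p p (\<lambda>(i,j). A i j)) else 0)"
proof (cases "odd (p + q)")
  case True
  then have "p \<noteq> q" by auto
  then show ?thesis using True by (simp add: pf_mat_def)
next
  case False
  define k where "k = (p + q) div 2"
  have n: "p + q = 2 * k" using False by (simp add: k_def)
  let ?B = "blk p A"
  let ?T = "{t. t permutes {..<2*k}}"
  have "(\<Sum>s\<in>?T. of_int (sign s) * (\<Prod>i<k. ?B (s (2 * i)) (s (2 * i + 1))))
     = (\<Sum>t\<in>?T. of_int (sign (t \<circ> rho k)) * (\<Prod>i<k. ?B ((t \<circ> rho k) (2 * i)) ((t \<circ> rho k) (2 * i + 1))))"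
    by (rule sum_permutations_compose_right[OF rho_permutes])
  also have "\<dots> = (\<Sum>t\<in>?T. sg k * gfun k ?B t)"
  proof (rule sum.cong[OF refl])
    fix t assume "t \<in> ?T"
    then have t: "permutation t" using permutes_imp_permutation by auto
    have "(\<Prod>i<k. ?B ((t \<circ> rho k) (2 * i)) ((t \<circ> rho k) (2 * i + 1))) = (\<Prod>i<k. ?B (t i) (t (k + i)))"
      by (rule prod.cong) (auto simp: rho_even rho_odd rho_odd')
    moreover have "(of_int (sign (t \<circ> rho k)) :: complex) = of_int (sign t) * sg k"
      unfolding sign_compose[OF t rho_perm] of_int_mult rho_sign ..
    ultimately show "of_int (sign (t \<circ> rho k)) * (\<Prod>i<k. ?B ((t \<circ> rho k) (2 * i)) ((t \<circ> rho k) (2 * i + 1))) = sg k * gfun k ?B t"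
      by (simp add: gfun_def)
  qed
  also have "\<dots> = sg k * (\<Sum>t\<in>?T. gfun k ?B t)" by (simp add: sum_distrib_left)
  finally have eq: "(\<Sum>s\<in>?T. of_int (sign s) * (\<Prod>i<k. ?B (s (2 * i)) (s (2 * i + 1)))) = sg k * (\<Sum>t\<in>?T. gfun k ?B t)" .
  have pf: "pf_mat (p + q) ?B = sg k * (\<Sum>t\<in>?T. gfun k ?B t) / (2 ^ k * fact k)"
    unfolding n pf_mat_def using eq by simp
  show ?thesis
  proof (cases "p = q")
    case True
    then have pk: "p = k" using n by simp
    have "pf_mat (p + q) ?B = sg k * (2^k * fact k * det (mat k k (\<lambda>(i,j). A i j))) / (2 ^ k * fact k)"
      unfolding pf using gsum_square[of k A] pk by simp
    also have "\<dots> = sg k * det (mat k k (\<lambda>(i,j). A i j))" by simp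
    finally show ?thesis using True pk by simp
  next
    case False
    then have "p \<noteq> k" "p \<le> 2 * k" using n by auto
    then show ?thesis unfolding pf using gsum_nonsquare False by simp
  qed
qed

lemma pfsub_block:
  assumes lx: "length xs = p" and ly: "length ys = q"
    and z1: "\<forall>a\<in>set xs. \<forall>b\<in>set xs. M a b = 0"
    and z2: "\<forall>a\<in>set ys. \<forall>b\<in>set ys. M a b = 0"
    and sk: "\<forall>a\<in>set xs. \<forall>b\<in>set ys. M b a = - M a b"
  shows "pfsub M (xs @ ys) = (if p = q then sg p * det (mat p p (\<lambda>(i,j). M (xs ! i) (ys ! j))) else 0)"
proof -
  have "pfsub M (xs @ ys) = pf_mat (p + q) (blk p (\<lambda>i j. M (xs ! i) (ys ! j)))"
    unfolding pfsub_def
  proof (simp add: lx ly, rule pf_mat_cong)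
    fix i j assume i: "i < p + q" and j: "j < p + q"
    show "M ((xs @ ys) ! i) ((xs @ ys) ! j) = blk p (\<lambda>i j. M (xs ! i) (ys ! j)) i j"
    proof (cases "i < p")
      case True
      then have xi: "xs ! i \<in> set xs" using lx by simp
      show ?thesis
      proof (cases "j < p")
        case True
        then have "xs ! j \<in> set xs" using lx by simp
        then show ?thesis using \<open>i < p\<close> True xi z1 lx by (simp add: nth_append blk_def)
      next
        case False
        then show ?thesis using \<open>i < p\<close> lx by (simp add: nth_append blk_def)
      qed
    next
      case False
      then have yi: "ys ! (i - p) \<in> set ys" using ly i by simp
      show ?thesis
      proof (cases "j < p")
        case True
        then have "xs ! j \<in> set xs" using lx by simp
        then show ?thesis using False True yi sk lx by (simp add: nth_append blk_def)
      next
        case F2: False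
        then have "ys ! (j - p) \<in> set ys" using ly j by simp
        then show ?thesis using False F2 yi z2 lx by (simp add: nth_append blk_def)
      qed
    qed
  qed
  then show ?thesis using pf_blk by simp
qed

lemma sublab_append: "sublab (xs @ ys) I = sublab xs I @ sublab ys I"
  by (simp add: sublab_def)

lemma sublab_map: "sublab (map h xs) K = map h (sublab xs {x. h x \<in> K})"
  by (simp add: sublab_def filter_map o_def)

lemma set_sublab: "set (sublab xs I) = set xs \<inter> I"
  by (auto simp: sublab_def)

lemma distinct_sublab: "distinct xs \<Longrightarrow> distinct (sublab xs I)"
  by (simp add: sublab_def)

lemma sublab_cong: "I \<inter> set xs = J \<inter> set xs \<Longrightarrow> sublab xs I = sublab xs J"
  unfolding sublab_def by (rule filter_cong) auto

lemma det_zero_row: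
  assumes i: "i < n" and z: "\<forall>j<n. f (i, j) = 0"
  shows "det (mat n n f) = (0::complex)"
proof -
  have H: "\<forall>s\<in>{s. s permutes {0..<n}}. (\<Prod>i = 0..<n. mat n n f $$ (i, s i)) = 0"
  proof
    fix s assume "s \<in> {s. s permutes {0..<n}}"
    then have s: "s permutes {0..<n}" by simp
    have "s i < n" using permutes_in_image[OF s] i by simp
    then have "mat n n f $$ (i, s i) = 0" using i z by simp
    then show "(\<Prod>i = 0..<n. mat n n f $$ (i, s i)) = 0" using i
      by (intro prod_zero bexI[of _ i]) auto
  qed
  have "(\<Sum>s\<in>{s. s permutes {0..<n}}. (signof s :: complex) * (\<Prod>i = 0..<n. mat n n f $$ (i, s i))) = 0"
    by (rule sum.neutral) (use H in simp)
  then show ?thesis unfolding det_def dim_row_mat dim_col_mat by simp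
qed

lemma det_match:
  assumes L: "distinct L" and l1: "length (sublab L K1) = n" and l2: "length (sublab L K2) = n"
  shows "det (mat n n (\<lambda>(i,j). if sublab L K1 ! i = sublab L K2 ! j then c else 0))
       = (if K1 \<inter> set L = K2 \<inter> set L then c ^ n else (0::complex))"
proof (cases "K1 \<inter> set L = K2 \<inter> set L")
  case True
  then have eq: "sublab L K1 = sublab L K2" by (rule sublab_cong)
  have d: "distinct (sublab L K1)" by (rule distinct_sublab[OF L])
  have "mat n n (\<lambda>(i,j). if sublab L K1 ! i = sublab L K2 ! j then c else 0) = c \<cdot>\<^sub>m 1\<^sub>m n"
  proof (rule eq_matI)
    fix i j assume "i < dim_row (c \<cdot>\<^sub>m 1\<^sub>m n)" "j < dim_col (c \<cdot>\<^sub>m 1\<^sub>m n)"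
    then have i: "i < n" and j: "j < n" by auto
    have "(sublab L K1 ! i = sublab L K1 ! j) = (i = j)"
      using nth_eq_iff_index_eq[OF d] i j l1 by simp
    then show "mat n n (\<lambda>(i,j). if sublab L K1 ! i = sublab L K2 ! j then c else 0) $$ (i, j) = (c \<cdot>\<^sub>m 1\<^sub>m n) $$ (i, j)"
      using i j eq by simp
  qed auto
  then show ?thesis using True by simp
next
  case False
  have d1: "distinct (sublab L K1)" and d2: "distinct (sublab L K2)" using distinct_sublab[OF L] by auto
  have c1: "card (set (sublab L K1)) = n" using distinct_card[OF d1] l1 by simp
  have c2: "card (set (sublab L K2)) = n" using distinct_card[OF d2] l2 by simp
  have ne: "set (sublab L K1) \<noteq> set (sublab L K2)" using False by (auto simp: set_sublab)
  have "\<not> set (sublab L K1) \<subseteq> set (sublab L K2)"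
  proof
    assume "set (sublab L K1) \<subseteq> set (sublab L K2)"
    then have "set (sublab L K1) = set (sublab L K2)" using c1 c2 by (intro card_subset_eq) auto
    then show False using ne by simp
  qed
  then obtain x where x1: "x \<in> set (sublab L K1)" and x2: "x \<notin> set (sublab L K2)" by auto
  then obtain i where i: "i < n" and xi: "sublab L K1 ! i = x" using l1 by (auto simp: in_set_conv_nth)
  have "\<forall>j<n. (\<lambda>(i,j). if sublab L K1 ! i = sublab L K2 ! j then c else 0) (i, j) = 0"
  proof (intro allI impI)
    fix j assume "j < n"
    then have "sublab L K2 ! j \<in> set (sublab L K2)" using l2 by simp
    then show "(\<lambda>(i,j). if sublab L K1 ! i = sublab L K2 ! j then c else 0) (i, j) = 0"
      using xi x2 by auto
  qed
  then show ?thesis using det_zero_row[OF i] False by simp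
qed

locale cons =
  fixes R S :: "nat list" and X :: "nat \<Rightarrow> nat \<Rightarrow> complex" and m :: nat and x c :: complex
  assumes dR: "distinct R" and dS: "distinct S" and RS: "set R \<inter> set S = {}"
    and mR: "\<forall>a\<in>set R. a < m" and mS: "\<forall>a\<in>set S. a < m"
begin

definition h :: "nat \<Rightarrow> nat" where "h a = a + m"

definition S' :: "nat list" where "S' = map h S"

definition Ms :: "nat \<Rightarrow> nat \<Rightarrow> complex" where
  "Ms u v = (if u \<in> set R \<and> v \<in> set S' then x * X u (v - m)
     else if v \<in> set R \<and> u \<in> set S' then - (x * X v (u - m)) else 0)"

definition Mc :: "nat \<Rightarrow> nat \<Rightarrow> complex" where
  "Mc u v = (if u \<in> set S' \<and> v \<in> set S then (if u = h v then c else 0)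
     else if v \<in> set S' \<and> u \<in> set S then (if v = h u then - c else 0) else 0)"

lemma h_inj: "inj h" by (simp add: h_def inj_def)

lemma h_notR: "h y \<notin> set R" using mR by (auto simp: h_def)
lemma h_notS: "h y \<notin> set S" using mS by (auto simp: h_def)

lemma setS': "set S' = h ` set S" by (simp add: S'_def)

lemma S'R: "set S' \<inter> set R = {}" using h_notR by (auto simp: setS')
lemma S'S: "set S' \<inter> set S = {}" using h_notS by (auto simp: setS')

lemma dS': "distinct S'" unfolding S'_def using dS h_inj by (simp add: distinct_map inj_on_def inj_def)

lemma h_minus: "h y - m = y" by (simp add: h_def)

lemma Ms_skew: "skew_on (R @ S') Ms"
  unfolding skew_on_def Ms_def using S'R by auto

lemma Mc_skew: "skew_on (S' @ S) Mc"
  unfolding skew_on_def Mc_def using S'S by auto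

lemma state_val:
  assumes I: "I \<subseteq> set R" and J: "J \<subseteq> set S"
  shows "pfsub Ms (sublab (R @ S') (I \<union> h ` J))
     = sg (length (sublab R I)) * x ^ (length (sublab R I)) * detsub X (sublab R I) (sublab S J)"
proof -
  let ?rs = "sublab R I" and ?cs = "sublab S J"
  have e1: "sublab R (I \<union> h ` J) = ?rs"
    by (rule sublab_cong) (use h_notR in auto)
  have e2: "sublab S' (I \<union> h ` J) = map h ?cs"
    unfolding S'_def sublab_map
  proof (rule arg_cong[where f = "map h"], rule sublab_cong)
    show "{y. h y \<in> I \<union> h ` J} \<inter> set S = J \<inter> set S"
      using I h_notR inj_eq[OF h_inj] by auto
  qed
  have rsR: "set ?rs \<subseteq> set R" by (simp add: set_sublab)
  have csS: "set (map h ?cs) \<subseteq> set S'" by (auto simp: set_sublab setS')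
  have pf: "pfsub Ms (?rs @ map h ?cs) = (if length ?rs = length ?cs then sg (length ?rs) *
        det (mat (length ?rs) (length ?rs) (\<lambda>(i,j). Ms (?rs ! i) (map h ?cs ! j))) else 0)"
  proof (rule pfsub_block)
    show "\<forall>a\<in>set ?rs. \<forall>b\<in>set ?rs. Ms a b = 0" using rsR S'R by (auto simp: Ms_def)
    show "\<forall>a\<in>set (map h ?cs). \<forall>b\<in>set (map h ?cs). Ms a b = 0" using csS S'R by (auto simp: Ms_def)
    show "\<forall>a\<in>set ?rs. \<forall>b\<in>set (map h ?cs). Ms b a = - Ms a b" using rsR csS S'R by (auto simp: Ms_def)
  qed simp_all
  show ?thesis
  proof (cases "length ?rs = length ?cs")
    case True
    let ?k = "length ?rs"
    have "mat ?k ?k (\<lambda>(i,j). Ms (?rs ! i) (map h ?cs ! j)) = x \<cdot>\<^sub>m mat ?k ?k (\<lambda>(i,j). X (?rs ! i) (?cs ! j))"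
    proof (rule eq_matI)
      fix i j assume "i < dim_row (x \<cdot>\<^sub>m mat ?k ?k (\<lambda>(i,j). X (?rs ! i) (?cs ! j)))"
        "j < dim_col (x \<cdot>\<^sub>m mat ?k ?k (\<lambda>(i,j). X (?rs ! i) (?cs ! j)))"
      then have i: "i < ?k" and j: "j < ?k" by auto
      have "?rs ! i \<in> set R" using i rsR nth_mem by blast
      moreover have "?cs ! j \<in> set S" using nth_mem[of j ?cs] j True by (auto simp: set_sublab)
      then have "h (?cs ! j) \<in> set S'" by (simp add: setS')
      ultimately show "mat ?k ?k (\<lambda>(i,j). Ms (?rs ! i) (map h ?cs ! j)) $$ (i, j) =
          (x \<cdot>\<^sub>m mat ?k ?k (\<lambda>(i,j). X (?rs ! i) (?cs ! j))) $$ (i, j)"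
        using i j True by (simp add: Ms_def h_minus)
    qed auto
    then show ?thesis unfolding sublab_append e1 e2 pf detsub_def using True by simp
  next
    case False
    then show ?thesis unfolding sublab_append e1 e2 pf detsub_def by simp
  qed
qed

lemma cap_val:
  assumes KS: "K \<inter> set S = J"
  shows "pfsub Mc (sublab (S' @ S) (- K)) = (if (\<forall>y\<in>set S. h y \<in> K \<longleftrightarrow> y \<in> J)
     then sg (length (sublab S (- J))) * c ^ length (sublab S (- J)) else 0)"
proof -
  define K1 where "K1 = {y. h y \<in> - K}"
  let ?a = "sublab S K1" and ?b = "sublab S (- J)"
  have e1: "sublab S' (- K) = map h ?a" unfolding S'_def sublab_map K1_def ..
  have e2: "sublab S (- K) = ?b" by (rule sublab_cong) (use KS in auto)
  have aS: "set ?a \<subseteq> set S" and bS: "set ?b \<subseteq> set S" by (auto simp: set_sublab)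
  have haS': "set (map h ?a) \<subseteq> set S'" using aS by (auto simp: setS')
  have pf: "pfsub Mc (map h ?a @ ?b) = (if length ?a = length ?b then sg (length ?a) *
        det (mat (length ?a) (length ?a) (\<lambda>(i,j). Mc (map h ?a ! i) (?b ! j))) else 0)"
  proof (rule pfsub_block)
    show "\<forall>a\<in>set (map h ?a). \<forall>b\<in>set (map h ?a). Mc a b = 0" using haS' S'S h_notS by (auto simp: Mc_def)
    show "\<forall>a\<in>set ?b. \<forall>b\<in>set ?b. Mc a b = 0" using bS S'S by (auto simp: Mc_def)
    show "\<forall>a\<in>set (map h ?a). \<forall>b\<in>set ?b. Mc b a = - Mc a b" using haS' bS S'S by (auto simp: Mc_def)
  qed simp_all
  have cond: "(K1 \<inter> set S = - J \<inter> set S) = (\<forall>y\<in>set S. h y \<in> K \<longleftrightarrow> y \<in> J)"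
    unfolding K1_def by auto
  show ?thesis
  proof (cases "length ?a = length ?b")
    case True
    let ?n = "length ?a"
    have "mat ?n ?n (\<lambda>(i,j). Mc (map h ?a ! i) (?b ! j)) = mat ?n ?n (\<lambda>(i,j). if ?a ! i = ?b ! j then c else 0)"
    proof (rule eq_matI)
      fix i j assume "i < dim_row (mat ?n ?n (\<lambda>(i,j). if ?a ! i = ?b ! j then c else 0))"
        "j < dim_col (mat ?n ?n (\<lambda>(i,j). if ?a ! i = ?b ! j then c else 0))"
      then have i: "i < ?n" and j: "j < ?n" by auto
      have ai: "?a ! i \<in> set S" using nth_mem[of i ?a] i aS by auto
      have bj: "?b ! j \<in> set S" using nth_mem[of j ?b] j True bS by auto
      have "h (?a ! i) \<in> set S'" using ai by (simp add: setS')
      then show "mat ?n ?n (\<lambda>(i,j). Mc (map h ?a ! i) (?b ! j)) $$ (i, j) =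
          mat ?n ?n (\<lambda>(i,j). if ?a ! i = ?b ! j then c else 0) $$ (i, j)"
        using i j bj inj_eq[OF h_inj] by (simp add: Mc_def)
    qed auto
    moreover have "det (mat ?n ?n (\<lambda>(i,j). if ?a ! i = ?b ! j then c else 0))
        = (if K1 \<inter> set S = - J \<inter> set S then c ^ ?n else 0)"
      by (rule det_match[OF dS refl True[symmetric]])
    ultimately show ?thesis unfolding sublab_append e1 e2 pf cond[symmetric] using True by simp
  next
    case False
    have "\<not> (K1 \<inter> set S = - J \<inter> set S)"
    proof
      assume "K1 \<inter> set S = - J \<inter> set S"
      then have "?a = ?b" by (rule sublab_cong)
      then show False using False by simp
    qed
    then show ?thesis unfolding sublab_append e1 e2 pf cond[symmetric] using False by simp
  qed
qed

definition F :: tmor where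
  "F = comp (tensor (idm R) (sPfv (S' @ S) Mc)) (tensor (sPf (R @ S') Ms) (idm S))"

lemma F_tgt: "tgt F = R" by (simp add: F_def comp_def tensor_def idm_def sPfv_def sPf_def)
lemma F_src: "src F = S" by (simp add: F_def comp_def tensor_def idm_def sPfv_def sPf_def)

lemma F_coef:
  "coef F I J = (\<Sum>K\<in>Pow (set (R @ S' @ S)).
     (if I \<subseteq> set R \<and> K \<inter> set R = I then pfsub Mc (sublab (S' @ S) (- (K \<inter> set (S' @ S)))) else 0)
   * (if J \<subseteq> set S \<and> K \<inter> set S = J then pfsub Ms (sublab (R @ S') (K \<inter> set (R @ S'))) else 0))"
proof -
  have src: "src (tensor (idm R) (sPfv (S' @ S) Mc)) = R @ S' @ S" by (simp add: tensor_def idm_def sPfv_def)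
  show ?thesis unfolding F_def comp_def tmor.select_convs src
  proof (rule sum.cong[OF refl])
    fix K assume "K \<in> Pow (set (R @ S' @ S))"
    then have K: "K \<subseteq> set R \<union> set S' \<union> set S" by auto
    show "coef (tensor (idm R) (sPfv (S' @ S) Mc)) I K * coef (tensor (sPf (R @ S') Ms) (idm S)) K J =
      (if I \<subseteq> set R \<and> K \<inter> set R = I then pfsub Mc (sublab (S' @ S) (- (K \<inter> set (S' @ S)))) else 0) *
      (if J \<subseteq> set S \<and> K \<inter> set S = J then pfsub Ms (sublab (R @ S') (K \<inter> set (R @ S'))) else 0)"
      using K by (auto simp: tensor_def idm_def sPfv_def sPf_def)
  qed
qed

lemma K0_char:
  assumes K: "K \<subseteq> set R \<union> set S' \<union> set S" and I: "I \<subseteq> set R" and J: "J \<subseteq> set S"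
  shows "(K \<inter> set R = I \<and> K \<inter> set S = J \<and> (\<forall>y\<in>set S. h y \<in> K \<inter> set (S' @ S) \<longleftrightarrow> y \<in> J))
     \<longleftrightarrow> K = I \<union> h ` J \<union> J"
proof
  assume A: "K \<inter> set R = I \<and> K \<inter> set S = J \<and> (\<forall>y\<in>set S. h y \<in> K \<inter> set (S' @ S) \<longleftrightarrow> y \<in> J)"
  show "K = I \<union> h ` J \<union> J"
  proof
    show "K \<subseteq> I \<union> h ` J \<union> J"
    proof
      fix z assume z: "z \<in> K"
      then consider "z \<in> set R" | "z \<in> set S'" | "z \<in> set S" using K by auto
      then show "z \<in> I \<union> h ` J \<union> J"
      proof cases
        case 1 then show ?thesis using A z by auto
      next
        case 2
        then obtain y where y: "y \<in> set S" "z = h y" by (auto simp: setS')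
        then have "h y \<in> K \<inter> set (S' @ S)" using z 2 by auto
        then have "y \<in> J" using A y by blast
        then show ?thesis using y by auto
      next
        case 3 then show ?thesis using A z by auto
      qed
    qed
    show "I \<union> h ` J \<union> J \<subseteq> K"
    proof
      fix z assume "z \<in> I \<union> h ` J \<union> J"
      then consider "z \<in> I" | "z \<in> h ` J" | "z \<in> J" by auto
      then show "z \<in> K"
      proof cases
        case 1 then show ?thesis using A by auto
      next
        case 2
        then obtain y where y: "y \<in> J" "z = h y" by auto
        then show ?thesis using A J by auto
      next
        case 3 then show ?thesis using A by auto
      qed
    qed
  qed
next
  assume K0: "K = I \<union> h ` J \<union> J"
  have "K \<inter> set R = I" using K0 I J RS h_notR by auto
  moreover have "K \<inter> set S = J" using K0 I J RS h_notS by auto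
  moreover have "\<forall>y\<in>set S. h y \<in> K \<inter> set (S' @ S) \<longleftrightarrow> y \<in> J"
    using K0 I J h_notR h_notS inj_eq[OF h_inj] by (auto simp: setS')
  ultimately show "K \<inter> set R = I \<and> K \<inter> set S = J \<and> (\<forall>y\<in>set S. h y \<in> K \<inter> set (S' @ S) \<longleftrightarrow> y \<in> J)" by blast
qed

lemma F_val:
  assumes I: "I \<subseteq> set R" and J: "J \<subseteq> set S"
  shows "coef F I J = sg (length (sublab S (- J))) * c ^ length (sublab S (- J)) *
     (sg (length (sublab R I)) * x ^ (length (sublab R I)) * detsub X (sublab R I) (sublab S J))"
proof -
  define K0 where "K0 = I \<union> h ` J \<union> J"
  define V where "V = sg (length (sublab S (- J))) * c ^ length (sublab S (- J)) *
     (sg (length (sublab R I)) * x ^ (length (sublab R I)) * detsub X (sublab R I) (sublab S J))"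
  have K0U: "K0 \<in> Pow (set (R @ S' @ S))" using I J by (auto simp: K0_def setS')
  have "coef F I J = (\<Sum>K\<in>Pow (set (R @ S' @ S)). if K = K0 then V else 0)"
    unfolding F_coef
  proof (rule sum.cong[OF refl])
    fix K assume "K \<in> Pow (set (R @ S' @ S))"
    then have K: "K \<subseteq> set R \<union> set S' \<union> set S" by auto
    let ?c1 = "if I \<subseteq> set R \<and> K \<inter> set R = I then pfsub Mc (sublab (S' @ S) (- (K \<inter> set (S' @ S)))) else 0"
    let ?c2 = "if J \<subseteq> set S \<and> K \<inter> set S = J then pfsub Ms (sublab (R @ S') (K \<inter> set (R @ S'))) else 0"
    show "?c1 * ?c2 = (if K = K0 then V else 0)"
    proof (cases "K \<inter> set R = I \<and> K \<inter> set S = J")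
      case True
      have KS': "K \<inter> set (S' @ S) \<inter> set S = J" using True by auto
      have cap: "?c1 = (if (\<forall>y\<in>set S. h y \<in> K \<inter> set (S' @ S) \<longleftrightarrow> y \<in> J)
         then sg (length (sublab S (- J))) * c ^ length (sublab S (- J)) else 0)"
        using True I cap_val[OF KS'] by simp
      show ?thesis
      proof (cases "\<forall>y\<in>set S. h y \<in> K \<inter> set (S' @ S) \<longleftrightarrow> y \<in> J")
        case T2: True
        have KK: "K = K0" using K0_char[OF K I J] True T2 unfolding K0_def by blast
        have "K \<inter> set (R @ S') = I \<union> h ` J" using I J RS h_notR h_notS by (auto simp: KK K0_def setS')
        then have "?c2 = sg (length (sublab R I)) * x ^ (length (sublab R I)) * detsub X (sublab R I) (sublab S J)"
          using True J state_val[OF I J] by simp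
        then show ?thesis using cap T2 KK by (simp add: V_def)
      next
        case F2: False
        have "K \<noteq> K0" using K0_char[OF K I J] True F2 unfolding K0_def by blast
        have "?c1 = 0" unfolding cap by (rule if_not_P[OF F2])
        then show ?thesis using \<open>K \<noteq> K0\<close> by simp
      qed
    next
      case False
      then have "K \<noteq> K0" using K0_char[OF K I J] by (auto simp: K0_def)
      then show ?thesis using False by auto
    qed
  qed
  also have "\<dots> = V" using K0U by simp
  finally show ?thesis by (simp add: V_def)
qed

lemma F_zero:
  assumes "\<not> (I \<subseteq> set R \<and> J \<subseteq> set S)"
  shows "coef F I J = 0"
  unfolding F_coef using assms by (intro sum.neutral) auto

lemma F_Pmor: "F \<in> Pmor"
proof -
  have d1: "distinct (S' @ S)" using dS' dS S'S by auto
  have d2: "distinct (R @ S')" using dR dS' S'R by auto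
  have a: "tensor (idm R) (sPfv (S' @ S) Mc) \<in> Pmor"
    by (rule Pmor.tens[OF Pmor.ident[OF dR] Pmor.genPfv[OF d1 Mc_skew]])
       (use RS S'R in \<open>auto simp: idm_def sPfv_def\<close>)
  have b: "tensor (sPf (R @ S') Ms) (idm S) \<in> Pmor"
    by (rule Pmor.tens[OF Pmor.genPf[OF d2 Ms_skew] Pmor.ident[OF dS]])
       (use RS S'S in \<open>auto simp: idm_def sPf_def\<close>)
  show ?thesis unfolding F_def
    by (rule Pmor.compose[OF a b]) (simp add: tensor_def idm_def sPf_def sPfv_def)
qed

lemma F_eq:
  assumes const: "\<forall>p\<le>length S. sg (length S - p) * c ^ (length S - p) * (sg p * x ^ p) = 1"
  shows "F = sDet R S X"
proof (rule tmor.equality)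
  show "tgt F = tgt (sDet R S X)" by (simp add: F_tgt sDet_def)
  show "src F = src (sDet R S X)" by (simp add: F_src sDet_def)
  show "tmor.more F = tmor.more (sDet R S X)" by simp
  show "coef F = coef (sDet R S X)"
  proof (intro ext)
    fix I J
    show "coef F I J = coef (sDet R S X) I J"
    proof (cases "I \<subseteq> set R \<and> J \<subseteq> set S")
      case True
      let ?p = "length (sublab R I)" and ?q = "length (sublab S J)"
      have len: "length (sublab S (- J)) = length S - ?q"
        using sum_length_filter_compl[of "\<lambda>i. i \<in> J" S] by (simp add: sublab_def)
      have qle: "?q \<le> length S" by (simp add: sublab_def)
      show ?thesis
      proof (cases "?p = ?q")
        case True2: True
        have "sg (length S - ?q) * c ^ (length S - ?q) * (sg ?q * x ^ ?q) = 1" using const qle by blast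
        then show ?thesis using True True2 F_val len
          by (simp add: sDet_def mult.assoc[symmetric])
      next
        case False
        then show ?thesis using True F_val by (simp add: sDet_def detsub_def)
      qed
    next
      case False
      then show ?thesis using F_zero by (auto simp: sDet_def)
    qed
  qed
qed

end

lemma const_exists: "\<exists>c x :: complex. \<forall>p\<le>n. sg (n - p) * c ^ (n - p) * (sg p * x ^ p) = 1"
proof -
  have "\<exists>c::complex. c ^ n = sg n"
  proof (cases "sg n = 1")
    case True then show ?thesis by (intro exI[of _ 1]) simp
  next
    case False
    have "sg n = -1" using sg_sq[of n] False
      by (metis (no_types, lifting) mult_cancel_left1 mult_minus1 square_eq_1_iff)
    moreover have "n \<noteq> 0" using False by (cases n) auto
    ultimately have "cis (pi / real n) ^ n = sg n" by (simp add: DeMoivre)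
    then show ?thesis by blast
  qed
  then obtain c :: complex where c: "c ^ n = sg n" by blast
  define x where "x = c * (-1) ^ (n + 1)"
  have "\<forall>p\<le>n. sg (n - p) * c ^ (n - p) * (sg p * x ^ p) = 1"
  proof (intro allI impI)
    fix p assume p: "p \<le> n"
    have s: "sg n = sg p * sg (n - p) * (-1) ^ (p * (n - p))" using sg_add[of p "n - p"] p by simp
    have m1: "((-1::complex) ^ (p * (n - p))) * (-1) ^ (p * (n - p)) = 1" by (simp add: power_add[symmetric])
    have "sg p * sg (n - p) = sg n * (-1) ^ (p * (n - p))"
      using s m1 by (simp add: algebra_simps)
    moreover have "x ^ p * c ^ (n - p) = c ^ n * (-1) ^ ((n + 1) * p)"
    proof -
      have xp: "x ^ p = c ^ p * (-1) ^ ((n + 1) * p)"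
        unfolding x_def by (simp only: power_mult_distrib power_mult)
      have cc: "c ^ p * c ^ (n - p) = c ^ n" using p by (simp add: power_add[symmetric])
      have "x ^ p * c ^ (n - p) = (c ^ p * c ^ (n - p)) * (-1) ^ ((n + 1) * p)"
        unfolding xp by (simp only: mult_ac)
      then show ?thesis unfolding cc .
    qed
    moreover have ev: "even (p * (n - p) + (n + 1) * p)"
    proof (cases "even p")
      case True then show ?thesis by simp
    next
      case False
      have e1: "p * (n - p) + (n + 1) * p = p * (n - p + n + 1)" by (simp add: algebra_simps)
      have e2: "even (n - p + n + 1)" using False p by presburger
      show ?thesis unfolding e1 using e2 by simp
    qed
    ultimately have "sg (n - p) * c ^ (n - p) * (sg p * x ^ p) = sg n * c ^ n * ((-1) ^ (p * (n - p)) * (-1) ^ ((n + 1) * p))"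
      by (simp add: algebra_simps)
    also have "(-1::complex) ^ (p * (n - p)) * (-1) ^ ((n + 1) * p) = 1"
      using ev by (simp add: power_add[symmetric])
    also have "sg n * c ^ n = 1" using c sg_sq by simp
    finally show "sg (n - p) * c ^ (n - p) * (sg p * x ^ p) = 1" by simp
  qed
  then show ?thesis by blast
qed

lemma disjoint_case:
  assumes dR: "distinct R" and dS: "distinct S" and RS: "set R \<inter> set S = {}"
  shows "sDet R S X \<in> Pmor"
proof -
  define m where "m = Suc (Max (insert 0 (set R \<union> set S)))"
  have mR: "\<forall>a\<in>set R. a < m" and mS: "\<forall>a\<in>set S. a < m"
    by (auto simp: m_def less_Suc_eq_le)
  obtain c x :: complex where const: "\<forall>p\<le>length S. sg (length S - p) * c ^ (length S - p) * (sg p * x ^ p) = 1"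
    using const_exists by blast
  interpret cons R S X m x c by standard (use dR dS RS mR mS in auto)
  show ?thesis using F_Pmor F_eq[OF const] by simp
qed

lemma general_case:
  assumes dR: "distinct R" and dS: "distinct S"
  shows "sDet R S X \<in> Pmor"
proof -
  define m where "m = Suc (Max (insert 0 (set R \<union> set S)))"
  have mR: "\<forall>a\<in>set R. a < m" and mS: "\<forall>a\<in>set S. a < m"
    by (auto simp: m_def less_Suc_eq_le)
  define g where "g = (\<lambda>a::nat. a + m)"
  have ginj: "inj g" by (simp add: g_def inj_def)
  define R1 where "R1 = map g R"
  have gR: "g y \<notin> set R" for y using mR by (auto simp: g_def)
  have gS: "g y \<notin> set S" for y using mS by (auto simp: g_def)
  have dR1: "distinct R1" unfolding R1_def using dR ginj by (simp add: distinct_map inj_on_def inj_def)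
  have R1R: "set R \<inter> set R1 = {}" using gR by (auto simp: R1_def)
  have R1S: "set R1 \<inter> set S = {}" using gS by (auto simp: R1_def)
  define P where "P = (\<lambda>u v. if v = g u then 1 else (0::complex))"
  define X1 where "X1 = (\<lambda>u v. X (u - m) v)"
  have A: "sDet R R1 P \<in> Pmor" by (rule disjoint_case[OF dR dR1 R1R])
  have B: "sDet R1 S X1 \<in> Pmor" by (rule disjoint_case[OF dR1 dS R1S])
  have C: "comp (sDet R R1 P) (sDet R1 S X1) \<in> Pmor"
    by (rule Pmor.compose[OF A B]) (simp add: sDet_def)
  have Pval: "detsub P (sublab R I) (sublab R1 K) = (if K = g ` I then 1 else 0)"
    if I: "I \<subseteq> set R" and K: "K \<subseteq> set R1" for I K
  proof -
    have e: "sublab R1 (g ` I) = map g (sublab R I)"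
      unfolding R1_def sublab_map by (rule arg_cong[where f = "map g"], rule sublab_cong) (use inj_eq[OF ginj] in auto)
    have gI: "g ` I \<subseteq> set R1" using I by (auto simp: R1_def)
    show ?thesis
    proof (cases "length (sublab R I) = length (sublab R1 K)")
      case True
      let ?n = "length (sublab R I)"
      have l1: "length (sublab R1 (g ` I)) = ?n" using e by simp
      have l2: "length (sublab R1 K) = ?n" using True by simp
      have "mat ?n ?n (\<lambda>(i,j). P (sublab R I ! i) (sublab R1 K ! j))
          = mat ?n ?n (\<lambda>(i,j). if sublab R1 (g ` I) ! i = sublab R1 K ! j then 1 else 0)"
      proof (rule eq_matI)
        fix i j assume "i < dim_row (mat ?n ?n (\<lambda>(i,j). if sublab R1 (g ` I) ! i = sublab R1 K ! j then (1::complex) else 0))"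
          "j < dim_col (mat ?n ?n (\<lambda>(i,j). if sublab R1 (g ` I) ! i = sublab R1 K ! j then (1::complex) else 0))"
        then have i: "i < ?n" and j: "j < ?n" by auto
        show "mat ?n ?n (\<lambda>(i,j). P (sublab R I ! i) (sublab R1 K ! j)) $$ (i, j) =
           mat ?n ?n (\<lambda>(i,j). if sublab R1 (g ` I) ! i = sublab R1 K ! j then 1 else 0) $$ (i, j)"
          using i j by (auto simp: e P_def)
      qed auto
      moreover have "det (mat ?n ?n (\<lambda>(i,j). if sublab R1 (g ` I) ! i = sublab R1 K ! j then 1 else 0))
          = (if g ` I \<inter> set R1 = K \<inter> set R1 then 1 ^ ?n else (0::complex))"
        by (rule det_match[OF dR1 l1 l2])
      moreover have "(g ` I \<inter> set R1 = K \<inter> set R1) = (K = g ` I)" using gI K by auto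
      ultimately show ?thesis using True by (simp add: detsub_def)
    next
      case False
      have "K \<noteq> g ` I"
      proof
        assume "K = g ` I"
        then show False using False e by simp
      qed
      then show ?thesis using False by (simp add: detsub_def)
    qed
  qed
  have X1val: "detsub X1 (map g rs) cs = detsub X rs cs" for rs cs
  proof (cases "length rs = length cs")
    case True
    have "mat (length rs) (length cs) (\<lambda>(i,j). X1 (map g rs ! i) (cs ! j)) = mat (length rs) (length cs) (\<lambda>(i,j). X (rs ! i) (cs ! j))"
      by (rule eq_matI) (auto simp: X1_def g_def)
    then show ?thesis using True by (simp add: detsub_def)
  next
    case False then show ?thesis by (simp add: detsub_def)
  qed
  have "comp (sDet R R1 P) (sDet R1 S X1) = sDet R S X"
  proof (rule tmor.equality)
    show "coef (comp (sDet R R1 P) (sDet R1 S X1)) = coef (sDet R S X)"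
    proof (intro ext)
      fix I J
      show "coef (comp (sDet R R1 P) (sDet R1 S X1)) I J = coef (sDet R S X) I J"
      proof (cases "I \<subseteq> set R")
        case True
        have gI: "g ` I \<in> Pow (set R1)" using True by (auto simp: R1_def)
        have "coef (comp (sDet R R1 P) (sDet R1 S X1)) I J
            = (\<Sum>K\<in>Pow (set R1). if K = g ` I then coef (sDet R1 S X1) (g ` I) J else 0)"
          unfolding comp_def tmor.select_convs
        proof (simp only: sDet_def[of R R1 P] tmor.select_convs, rule sum.cong[OF refl])
          fix K assume "K \<in> Pow (set R1)"
          then have K: "K \<subseteq> set R1" by simp
          show "(if I \<subseteq> set R \<and> K \<subseteq> set R1 then detsub P (sublab R I) (sublab R1 K) else 0) * coef (sDet R1 S X1) K J
              = (if K = g ` I then coef (sDet R1 S X1) (g ` I) J else 0)"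
            using Pval[OF True K] True K by simp
        qed
        also have "\<dots> = coef (sDet R1 S X1) (g ` I) J" using gI by simp
        also have "\<dots> = coef (sDet R S X) I J"
        proof -
          have e: "sublab R1 (g ` I) = map g (sublab R I)"
            unfolding R1_def sublab_map by (rule arg_cong[where f = "map g"], rule sublab_cong) (use inj_eq[OF ginj] in auto)
          show ?thesis using gI True by (simp add: sDet_def e X1val)
        qed
        finally show ?thesis .
      next
        case False
        then show ?thesis unfolding comp_def by (simp add: sDet_def)
      qed
    qed
  qed (simp_all add: sDet_def comp_def)
  then show ?thesis using C by simp
qed

theorem mainTheorem13:
  shows "Dmor \<subseteq> Pmor"
proof
  fix f assume "f \<in> Dmor"
  then show "f \<in> Pmor"
  proof (induction rule: Dmor.induct)
    case (gen R S X) then show ?case by (rule general_case)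
  next
    case (ident A) then show ?case by (rule Pmor.ident)
  next
    case (compose f g) then show ?case by (blast intro: Pmor.compose)
  next
    case (tens f g) then show ?case by (blast intro: Pmor.tens)
  qed
qed

end
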